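(* Let $G$ be a finite simple connected graph and $w$ a non-negative real function on the edges of $G$. Let $d_s$ be the shortest-path distance on the vertices of $G$, and define $\pi(u,u)=0$ and, for distinct vertices $u,v$, \[\pi(u,v) = \min\left\{ \frac{p(\gamma)}{p(\gamma)+1} : \gamma \text{ is a shortest path between } u \text{ and } v\right\},\] where $p(\gamma) = \prod_{e \in \gamma} w(e)$ is the product of the weights of the edges of $\gamma$. Then $d^{\pi}_w := d_s + \pi$ is a metric on the vertex set of $G$. *)

theory Defs
  imports Complex_Main
begin

text \<open>A finite simple graph: finite vertex set V, symmetric irreflexive edge relation E on V.
  Edge weights are functions on (undirected) edges, represented as two-element sets {u,v}.\<close>

definition simple_graph :: "'a set \<Rightarrow> ('a \<Rightarrow> 'a \<Rightarrow> bool) \<Rightarrow> bool" where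
  "simple_graph V E \<longleftrightarrow> finite V \<and> (\<forall>u v. E u v \<longrightarrow> u \<in> V \<and> v \<in> V)
     \<and> (\<forall>u v. E u v \<longrightarrow> E v u) \<and> (\<forall>u. \<not> E u u)"

definition walk_between :: "'a set \<Rightarrow> ('a \<Rightarrow> 'a \<Rightarrow> bool) \<Rightarrow> 'a \<Rightarrow> 'a \<Rightarrow> 'a list \<Rightarrow> bool" where
  "walk_between V E u v xs \<longleftrightarrow> xs \<noteq> [] \<and> set xs \<subseteq> V \<and> successively E xs
     \<and> hd xs = u \<and> last xs = v"

definition connected_graph :: "'a set \<Rightarrow> ('a \<Rightarrow> 'a \<Rightarrow> bool) \<Rightarrow> bool" where
  "connected_graph V E \<longleftrightarrow> (\<forall>u\<in>V. \<forall>v\<in>V. \<exists>xs. walk_between V E u v xs)"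

definition dist_s :: "'a set \<Rightarrow> ('a \<Rightarrow> 'a \<Rightarrow> bool) \<Rightarrow> 'a \<Rightarrow> 'a \<Rightarrow> nat" where
  "dist_s V E u v = (LEAST n. \<exists>xs. walk_between V E u v xs \<and> length xs = Suc n)"

text \<open>Shortest paths between u and v (walks of minimal length; these are automatically paths).\<close>
definition shortest_path :: "'a set \<Rightarrow> ('a \<Rightarrow> 'a \<Rightarrow> bool) \<Rightarrow> 'a \<Rightarrow> 'a \<Rightarrow> 'a list \<Rightarrow> bool" where
  "shortest_path V E u v xs \<longleftrightarrow> walk_between V E u v xs \<and> length xs = Suc (dist_s V E u v)"

definition path_weight :: "('a set \<Rightarrow> real) \<Rightarrow> 'a list \<Rightarrow> real" where
  "path_weight w xs = prod_list (map (\<lambda>(x, y). w {x, y}) (zip xs (tl xs)))"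

definition pi_w :: "'a set \<Rightarrow> ('a \<Rightarrow> 'a \<Rightarrow> bool) \<Rightarrow> ('a set \<Rightarrow> real) \<Rightarrow> 'a \<Rightarrow> 'a \<Rightarrow> real" where
  "pi_w V E w u v = (if u = v then 0 else
     Min {path_weight w xs / (path_weight w xs + 1) | xs. shortest_path V E u v xs})"

definition d_pi :: "'a set \<Rightarrow> ('a \<Rightarrow> 'a \<Rightarrow> bool) \<Rightarrow> ('a set \<Rightarrow> real) \<Rightarrow> 'a \<Rightarrow> 'a \<Rightarrow> real" where
  "d_pi V E w u v = real (dist_s V E u v) + pi_w V E w u v"

definition metric_on :: "'a set \<Rightarrow> ('a \<Rightarrow> 'a \<Rightarrow> real) \<Rightarrow> bool" where
  "metric_on V d \<longleftrightarrow>
     (\<forall>x\<in>V. \<forall>y\<in>V. d x y \<ge> 0 \<and> (d x y = 0 \<longleftrightarrow> x = y) \<and> d x y = d y x)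
     \<and> (\<forall>x\<in>V. \<forall>y\<in>V. \<forall>z\<in>V. d x z \<le> d x y + d y z)"

end

theory Submission
  imports Defs
begin

lemma pw_Nil[simp]: "path_weight w [] = 1"
  by (simp add: path_weight_def)
lemma pw_single[simp]: "path_weight w [a] = 1"
  by (simp add: path_weight_def)
lemma pw_cons2[simp]: "path_weight w (a # b # r) = w {a, b} * path_weight w (b # r)"
  by (simp add: path_weight_def)

lemma pw_append:
  assumes "xs \<noteq> []" "ys \<noteq> []" "last xs = hd ys"
  shows "path_weight w (xs @ tl ys) = path_weight w xs * path_weight w ys"
  using assms
proof (induction xs rule: induct_list012)
  case (2 x)
  then show ?case by (cases ys) auto
next
  case (3 x y zs)
  then show ?case by auto
qed auto

lemma pw_rev: "path_weight w (rev xs) = path_weight w xs"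
proof (induction xs rule: induct_list012)
  case (3 x y zs)
  have "rev (x # y # zs) = rev (y # zs) @ tl [y, x]" by simp
  then have "path_weight w (rev (x # y # zs)) = path_weight w (rev (y # zs)) * path_weight w [y, x]"
    using pw_append[of "rev (y # zs)" "[y,x]" w] by simp
  then show ?case using 3 by (simp add: insert_commute)
qed auto

lemma pw_nonneg:
  assumes "successively E xs" "\<And>u v. E u v \<Longrightarrow> w {u, v} \<ge> (0::real)"
  shows "path_weight w xs \<ge> 0"
  using assms(1)
proof (induction xs rule: induct_list012)
  case (3 x y zs)
  then show ?case using assms(2)[of x y] by simp
qed auto

lemma walk_append:
  assumes "walk_between V E u y xs" "walk_between V E y z ys"
  shows "walk_between V E u z (xs @ tl ys)" "length (xs @ tl ys) = length xs + length ys - 1"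
proof -
  obtain r where ys: "ys = y # r" using assms(2) unfolding walk_between_def
    by (cases ys) auto
  have xs: "xs \<noteq> []" "set xs \<subseteq> V" "successively E xs" "hd xs = u" "last xs = y"
    using assms(1) unfolding walk_between_def by auto
  have r: "set r \<subseteq> V" "successively E (y # r)" "last (y # r) = z"
    using assms(2) unfolding walk_between_def ys by auto
  have "successively E (xs @ r)"
  proof (cases r)
    case (Cons b r')
    then have "E y b" "successively E r" using r(2) by auto
    then show ?thesis using xs Cons by (simp add: successively_append_iff)
  qed (use xs in simp)
  moreover have "last (xs @ r) = z" using r(3) xs(5) by (cases "r = []") auto
  moreover have "hd (xs @ r) = u" using xs by simp
  ultimately show "walk_between V E u z (xs @ tl ys)" using xs r unfolding walk_between_def ys
    by simp
  show "length (xs @ tl ys) = length xs + length ys - 1" using ys by simp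
qed

lemma walk_rev:
  assumes "simple_graph V E" "walk_between V E u v xs"
  shows "walk_between V E v u (rev xs)"
proof -
  have "successively (\<lambda>x y. E y x) xs" using assms unfolding walk_between_def simple_graph_def
    by (metis successively_mono)
  then show ?thesis using assms(2) unfolding walk_between_def
    by (simp add: hd_rev last_rev)
qed

lemma dist_ex:
  assumes "connected_graph V E" "u \<in> V" "v \<in> V"
  shows "\<exists>xs. shortest_path V E u v xs"
proof -
  obtain xs where xs: "walk_between V E u v xs" using assms unfolding connected_graph_def by blast
  then have "xs \<noteq> []" by (simp add: walk_between_def)
  then have "\<exists>n xs. walk_between V E u v xs \<and> length xs = Suc n" using xs
    by (metis length_greater_0_conv Suc_pred)
  then show ?thesis unfolding shortest_path_def dist_s_def by (rule LeastI_ex)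
qed

lemma dist_le:
  assumes "walk_between V E u v xs"
  shows "dist_s V E u v \<le> length xs - 1"
proof -
  have "xs \<noteq> []" using assms by (simp add: walk_between_def)
  then have "walk_between V E u v xs \<and> length xs = Suc (length xs - 1)" using assms by simp
  then show ?thesis unfolding dist_s_def by (intro Least_le) blast
qed

lemma dist_le_rev:
  assumes "simple_graph V E" "connected_graph V E" "u \<in> V" "v \<in> V"
  shows "dist_s V E u v \<le> dist_s V E v u"
proof -
  obtain zs where zs: "shortest_path V E v u zs" using dist_ex[OF assms(2,4,3)] by blast
  have w0: "walk_between V E v u zs" and l: "length zs = Suc (dist_s V E v u)"
    using zs unfolding shortest_path_def by simp_all
  have w: "walk_between V E u v (rev zs)" by (rule walk_rev[OF assms(1) w0])
  show ?thesis using dist_le[OF w] l by simp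
qed

lemma dist_sym:
  assumes "simple_graph V E" "connected_graph V E" "u \<in> V" "v \<in> V"
  shows "dist_s V E u v = dist_s V E v u"
  using dist_le_rev[OF assms] dist_le_rev[OF assms(1,2,4,3)] by simp

lemma sp_finite:
  assumes "simple_graph V E"
  shows "finite {xs. shortest_path V E u v xs}"
proof -
  have "{xs. shortest_path V E u v xs} \<subseteq> {xs. set xs \<subseteq> V \<and> length xs = Suc (dist_s V E u v)}"
    unfolding shortest_path_def walk_between_def by auto
  moreover have "finite V" using assms unfolding simple_graph_def by blast
  ultimately show ?thesis using finite_lists_length_eq finite_subset by blast
qed

lemma pi_props:
  assumes "simple_graph V E" "connected_graph V E" "u \<in> V" "v \<in> V" "u \<noteq> v"
  shows "\<exists>xs. shortest_path V E u v xs \<and> pi_w V E w u v = path_weight w xs / (path_weight w xs + 1)"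
    "\<And>ys. shortest_path V E u v ys \<Longrightarrow> pi_w V E w u v \<le> path_weight w ys / (path_weight w ys + 1)"
proof -
  let ?S = "{path_weight w xs / (path_weight w xs + 1) | xs. shortest_path V E u v xs}"
  have eq: "?S = (\<lambda>xs. path_weight w xs / (path_weight w xs + 1)) ` {xs. shortest_path V E u v xs}"
    by blast
  have fin: "finite ?S" unfolding eq by (rule finite_imageI[OF sp_finite[OF assms(1)]])
  obtain xs0 where "shortest_path V E u v xs0" using dist_ex[OF assms(2,3,4)] by blast
  then have ne: "?S \<noteq> {}" by blast
  have pv: "pi_w V E w u v = Min ?S" unfolding pi_w_def using assms(5) by (simp only: if_False)
  have "Min ?S \<in> ?S" using Min_in[OF fin ne] .
  then show "\<exists>xs. shortest_path V E u v xs \<and> pi_w V E w u v = path_weight w xs / (path_weight w xs + 1)"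
    unfolding pv by blast
  show "\<And>ys. shortest_path V E u v ys \<Longrightarrow> pi_w V E w u v \<le> path_weight w ys / (path_weight w ys + 1)"
    unfolding pv by (rule Min_le[OF fin]) blast
qed

lemma frac_bounds:
  fixes p :: real assumes "p \<ge> 0"
  shows "p / (p + 1) \<ge> 0" "p / (p + 1) < 1"
  using assms by (auto simp: field_simps)

lemma frac_mono:
  fixes s t :: real assumes "0 \<le> s" "s \<le> t"
  shows "s / (s + 1) \<le> t / (t + 1)"
proof -
  have "s * (t + 1) \<le> t * (s + 1)" using assms by (simp add: algebra_simps)
  then show ?thesis using assms by (simp add: divide_simps)
qed

lemma frac_ineq:
  fixes a b :: real assumes "a \<ge> 0" "b \<ge> 0"
  shows "a * b / (a * b + 1) \<le> a / (a + 1) + b / (b + 1)"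
proof (cases "a \<le> 1")
  case True
  have "a * b \<le> b" using True assms by (simp add: mult_left_le_one_le)
  then have "a * b / (a * b + 1) \<le> b / (b + 1)" using assms by (simp add: frac_mono)
  moreover have "a / (a + 1) \<ge> 0" using assms by simp
  ultimately show ?thesis by linarith
next
  case F: False
  show ?thesis
  proof (cases "b \<le> 1")
    case True
    have "a * b \<le> a" using True assms by (simp add: mult_right_le_one_le)
    then have "a * b / (a * b + 1) \<le> a / (a + 1)" using assms by (simp add: frac_mono)
    moreover have "b / (b + 1) \<ge> 0" using assms by simp
    ultimately show ?thesis by linarith
  next
    case False
    have "a / (a + 1) \<ge> 1/2" "b / (b + 1) \<ge> 1/2" using F False by (auto simp: field_simps)
    moreover have "a * b / (a * b + 1) < 1" using assms by (simp add: frac_bounds)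
    ultimately show ?thesis by linarith
  qed
qed

lemma dist_self: "u \<in> V \<Longrightarrow> dist_s V E u u = 0"
proof -
  assume "u \<in> V"
  then have "walk_between V E u u [u]" unfolding walk_between_def by simp
  from dist_le[OF this] show ?thesis by simp
qed

lemma dist_zero:
  assumes "connected_graph V E" "u \<in> V" "v \<in> V" "dist_s V E u v = 0"
  shows "u = v"
proof -
  obtain xs where "shortest_path V E u v xs" using dist_ex[OF assms(1-3)] by blast
  then have "length xs = 1" "hd xs = u" "last xs = v" using assms(4)
    unfolding shortest_path_def walk_between_def by simp_all
  then show ?thesis by (cases xs) simp_all
qed

lemma sp_rev:
  assumes "simple_graph V E" "connected_graph V E" "u \<in> V" "v \<in> V" "shortest_path V E u v xs"
  shows "shortest_path V E v u (rev xs)"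
proof -
  have w: "walk_between V E v u (rev xs)" using walk_rev[OF assms(1)] assms(5)
    unfolding shortest_path_def by blast
  have "length (rev xs) = Suc (dist_s V E v u)" using assms(5) dist_sym[OF assms(1-4)]
    unfolding shortest_path_def by simp
  then show ?thesis using w unfolding shortest_path_def by simp
qed

lemma pi_le_rev:
  assumes "simple_graph V E" "connected_graph V E" "u \<in> V" "v \<in> V"
  shows "pi_w V E w u v \<le> pi_w V E w v u"
proof (cases "u = v")
  case True then show ?thesis by simp
next
  case False
  obtain xs where xs: "shortest_path V E v u xs"
    "pi_w V E w v u = path_weight w xs / (path_weight w xs + 1)"
    using pi_props(1)[OF assms(1,2,4,3)] False by metis
  have "shortest_path V E u v (rev xs)" using sp_rev[OF assms(1,2,4,3) xs(1)] .
  from pi_props(2)[OF assms False this] show ?thesis using xs(2) by (simp add: pw_rev)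
qed

lemma pi_bounds:
  assumes "simple_graph V E" "connected_graph V E" "u \<in> V" "v \<in> V"
    "\<And>u v. E u v \<Longrightarrow> w {u, v} \<ge> 0"
  shows "0 \<le> pi_w V E w u v \<and> pi_w V E w u v < 1"
proof (cases "u = v")
  case True then show ?thesis by (simp add: pi_w_def)
next
  case False
  obtain xs where xs: "shortest_path V E u v xs"
    "pi_w V E w u v = path_weight w xs / (path_weight w xs + 1)"
    using pi_props(1)[OF assms(1-4)] False by metis
  have "path_weight w xs \<ge> 0" using xs(1) pw_nonneg[of E xs w] assms(5)
    unfolding shortest_path_def walk_between_def by blast
  then show ?thesis using xs(2) frac_bounds by simp
qed

theorem theorem3:
  fixes V :: "'a set" and E :: "'a \<Rightarrow> 'a \<Rightarrow> bool" and w :: "'a set \<Rightarrow> real"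
  assumes "simple_graph V E"
    and "connected_graph V E"
    and "\<And>u v. E u v \<Longrightarrow> w {u, v} \<ge> 0"
  shows "metric_on V (d_pi V E w)"
  unfolding metric_on_def
proof (intro conjI ballI)
  fix x y assume xy: "x \<in> V" "y \<in> V"
  have pb: "0 \<le> pi_w V E w x y" using pi_bounds[of V E x y w, OF assms(1,2) xy assms(3)] by (rule conjunct1)
  then show "0 \<le> d_pi V E w x y" unfolding d_pi_def by simp
  have "dist_s V E x y = dist_s V E y x" by (rule dist_sym[OF assms(1,2) xy])
  moreover have "pi_w V E w x y = pi_w V E w y x"
    using pi_le_rev[OF assms(1,2) xy, of w] pi_le_rev[OF assms(1,2) xy(2,1), of w] by (rule order_antisym)
  ultimately show "d_pi V E w x y = d_pi V E w y x" unfolding d_pi_def by simp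
  show "(d_pi V E w x y = 0) = (x = y)"
  proof
    assume "d_pi V E w x y = 0"
    then have "dist_s V E x y = 0" using pb unfolding d_pi_def by simp
    then show "x = y" by (rule dist_zero[OF assms(2) xy])
  next
    assume "x = y" then show "d_pi V E w x y = 0"
      using dist_self[OF xy(1)] unfolding d_pi_def pi_w_def by simp
  qed
next
  fix x y z assume xyz: "x \<in> V" "y \<in> V" "z \<in> V"
  have nn: "0 \<le> pi_w V E w a b \<and> pi_w V E w a b < 1" if "a \<in> V" "b \<in> V" for a b
    by (rule pi_bounds[of V E a b w, OF assms(1,2) that assms(3)])
  have d0: "d_pi V E w a a = 0" if "a \<in> V" for a
    using dist_self[OF that] unfolding d_pi_def pi_w_def by simp
  have dnn: "d_pi V E w a b \<ge> 0" if "a \<in> V" "b \<in> V" for a b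
    using nn[OF that] unfolding d_pi_def by simp
  show "d_pi V E w x z \<le> d_pi V E w x y + d_pi V E w y z"
  proof (cases "x = y \<or> y = z \<or> x = z")
    case True
    moreover have "d_pi V E w x y \<ge> 0" "d_pi V E w y z \<ge> 0" using dnn xyz by auto
    ultimately show ?thesis using d0 xyz by auto
  next
    case False
    then have ne: "x \<noteq> y" "y \<noteq> z" "x \<noteq> z" by auto
    obtain g1 where g1: "shortest_path V E x y g1"
      "pi_w V E w x y = path_weight w g1 / (path_weight w g1 + 1)"
      using pi_props(1)[OF assms(1,2) xyz(1,2) ne(1), of w] by blast
    obtain g2 where g2: "shortest_path V E y z g2"
      "pi_w V E w y z = path_weight w g2 / (path_weight w g2 + 1)"
      using pi_props(1)[OF assms(1,2) xyz(2,3) ne(2), of w] by blast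
    have w1: "walk_between V E x y g1" "length g1 = Suc (dist_s V E x y)"
      using g1(1) unfolding shortest_path_def by simp_all
    have w2: "walk_between V E y z g2" "length g2 = Suc (dist_s V E y z)"
      using g2(1) unfolding shortest_path_def by simp_all
    have wg: "walk_between V E x z (g1 @ tl g2)" by (rule walk_append(1)[OF w1(1) w2(1)])
    have lg: "length (g1 @ tl g2) = Suc (dist_s V E x y + dist_s V E y z)"
      using walk_append(2)[OF w1(1) w2(1)] w1(2) w2(2) by simp
    have dle: "dist_s V E x z \<le> dist_s V E x y + dist_s V E y z"
      using dist_le[OF wg] lg by simp
    have b1: "pi_w V E w x z < 1" "pi_w V E w x y \<ge> 0" "pi_w V E w y z \<ge> 0"
      using nn xyz by auto
    show ?thesis
    proof (cases "dist_s V E x z = dist_s V E x y + dist_s V E y z")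
      case False
      then have "real (dist_s V E x z) + 1 \<le> real (dist_s V E x y) + real (dist_s V E y z)"
        using dle by linarith
      then show ?thesis using b1 unfolding d_pi_def by linarith
    next
      case True
      have sp: "shortest_path V E x z (g1 @ tl g2)"
        unfolding shortest_path_def using wg lg True by simp
      have p1: "path_weight w g1 \<ge> 0" using w1(1) pw_nonneg[of E g1 w] assms(3)
        unfolding walk_between_def by blast
      have p2: "path_weight w g2 \<ge> 0" using w2(1) pw_nonneg[of E g2 w] assms(3)
        unfolding walk_between_def by blast
      have pw: "path_weight w (g1 @ tl g2) = path_weight w g1 * path_weight w g2"
        using w1(1) w2(1) unfolding walk_between_def by (intro pw_append) auto
      have "pi_w V E w x z \<le> path_weight w (g1 @ tl g2) / (path_weight w (g1 @ tl g2) + 1)"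
        by (rule pi_props(2)[OF assms(1,2) xyz(1,3) ne(3) sp])
      also have "\<dots> \<le> pi_w V E w x y + pi_w V E w y z"
        unfolding pw g1(2) g2(2) by (rule frac_ineq[OF p1 p2])
      finally show ?thesis unfolding d_pi_def using True by simp
    qed
  qed
qed

end
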